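(* Let $x=(x_1,\dots,x_p)$ and $y=(y_1,\dots,y_q)$ be disjoint tuples of variables, let $G(x)$, $H(y)$, $K(y)$ be homogeneous polynomials with $G\cdot H$ and $K$ homogeneous of the same degree $d$, and let $F = G(x)H(y)+K(y)$. Let $\alpha=\partial/\partial x_j$ for some $j$. Then $$r(F) \geq \big(\mathrm{al}(\alpha\circ G)-\mathrm{al}(\alpha^2\circ G)\big)\cdot \mathrm{al}(H).$$ In particular, for any $a\ge 1$, $r(x_1^a H(y)+K(y)) \geq \mathrm{al}(H)$.
   Context: Apolarity: differential operators $\partial/\partial x_i$, $\partial/\partial y_i$ act on polynomials by differentiation, written $\Theta\circ F$. $\mathrm{al}(G)$ is the apolar length: the dimension over $\mathbb{C}$ of the space of all partial derivatives of all orders of $G$ (including $G$ itself; $0$ if $G=0$). $r(F)$ is the Waring rank of $F$: the least $r$ with $F=\sum_{i=1}^r c_i\ell_i^d$ for linear forms $\ell_i$ and scalars $c_i$. *)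

theory Defs
  imports Complex_Main "HOL-Library.Poly_Mapping"
begin

type_synonym cpoly = "(nat \<Rightarrow>\<^sub>0 nat) \<Rightarrow>\<^sub>0 complex"

definition cscale :: "complex \<Rightarrow> cpoly \<Rightarrow> cpoly" where
  "cscale c p = Poly_Mapping.map (\<lambda>a. c * a) p"

definition pvar :: "nat \<Rightarrow> cpoly" where
  "pvar i = Poly_Mapping.single (Poly_Mapping.single i 1) 1"

definition mon_deg :: "(nat \<Rightarrow>\<^sub>0 nat) \<Rightarrow> nat" where
  "mon_deg m = (\<Sum>i\<in>Poly_Mapping.keys m. Poly_Mapping.lookup m i)"

definition homogeneous :: "nat \<Rightarrow> cpoly \<Rightarrow> bool" where
  "homogeneous d p \<longleftrightarrow> (\<forall>m\<in>Poly_Mapping.keys p. mon_deg m = d)"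

definition pvars :: "cpoly \<Rightarrow> nat set" where
  "pvars p = (\<Union>m\<in>Poly_Mapping.keys p. Poly_Mapping.keys m)"

lift_definition pderiv_var :: "nat \<Rightarrow> cpoly \<Rightarrow> cpoly" is
  "\<lambda>i p m. of_nat (Poly_Mapping.lookup m i + 1) * Poly_Mapping.lookup p (m + Poly_Mapping.single i 1)"
proof -
  fix i and p :: "(nat \<Rightarrow>\<^sub>0 nat) \<Rightarrow>\<^sub>0 complex"
  have "{m. of_nat (Poly_Mapping.lookup m i + 1) * Poly_Mapping.lookup p (m + Poly_Mapping.single i 1) \<noteq> (0::complex)}
        \<subseteq> (\<lambda>m. m - Poly_Mapping.single i 1) ` Poly_Mapping.keys p"
  proof
    fix m assume "m \<in> {m. of_nat (Poly_Mapping.lookup m i + 1) * Poly_Mapping.lookup p (m + Poly_Mapping.single i 1) \<noteq> (0::complex)}"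
    then have "of_nat (Poly_Mapping.lookup m i + 1) * Poly_Mapping.lookup p (m + Poly_Mapping.single i 1) \<noteq> (0::complex)"
      by (rule CollectD)
    then have "Poly_Mapping.lookup p (m + Poly_Mapping.single i 1) \<noteq> 0"
      by (metis mult_zero_right)
    then have "m + Poly_Mapping.single i 1 \<in> Poly_Mapping.keys p"
      unfolding in_keys_iff .
    moreover have "m = (m + Poly_Mapping.single i 1) - Poly_Mapping.single i 1"
      by (rule add_diff_cancel_right'[symmetric])
    ultimately show "m \<in> (\<lambda>m. m - Poly_Mapping.single i 1) ` Poly_Mapping.keys p"
      by (rule image_eqI[rotated])
  qed
  then show "finite {m. of_nat (Poly_Mapping.lookup m i + 1) * Poly_Mapping.lookup p (m + Poly_Mapping.single i 1) \<noteq> (0::complex)}"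
    by (rule finite_subset[OF _ finite_imageI[OF finite_keys]])
qed

inductive_set all_derivs :: "cpoly \<Rightarrow> cpoly set" for G where
  self: "G \<in> all_derivs G"
| step: "p \<in> all_derivs G \<Longrightarrow> pderiv_var i p \<in> all_derivs G"

definition apolar_length :: "cpoly \<Rightarrow> nat" where
  "apolar_length G = vector_space.dim cscale (all_derivs G)"

definition linear_form_in :: "nat set \<Rightarrow> cpoly \<Rightarrow> bool" where
  "linear_form_in V l \<longleftrightarrow> homogeneous 1 l \<and> pvars l \<subseteq> V"

definition waring_rank :: "nat set \<Rightarrow> nat \<Rightarrow> cpoly \<Rightarrow> nat" where
  "waring_rank V d F = (LEAST r. \<exists>c l. (\<forall>i<r. linear_form_in V (l i))
       \<and> F = (\<Sum>i<r. cscale (c i) (l i ^ d)))"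

end

theory Submission
  imports Defs "HOL-Library.FuncSet"
begin


abbreviation lk :: "('a \<Rightarrow>\<^sub>0 'b::zero) \<Rightarrow> 'a \<Rightarrow> 'b" where "lk \<equiv> Poly_Mapping.lookup"
abbreviation kys :: "('a \<Rightarrow>\<^sub>0 'b::zero) \<Rightarrow> 'a set" where "kys \<equiv> Poly_Mapping.keys"
abbreviation sg :: "'a \<Rightarrow> 'b::zero \<Rightarrow> ('a \<Rightarrow>\<^sub>0 'b)" where "sg \<equiv> Poly_Mapping.single"

lemma cscale_conv: "cscale c p = sg 0 c * p"
  unfolding cscale_def by (rule mult_map_scale_conv_mult)

lemma lookup_cscale[simp]: "lk (cscale c p) m = c * lk p m"
  unfolding cscale_def by (simp add: Poly_Mapping.map.rep_eq when_def)

lemma vs: "vector_space cscale"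
proof
  fix a b :: complex and x y :: cpoly
  show "cscale a (x + y) = cscale a x + cscale a y"
    by (rule poly_mapping_eqI) (simp only: lookup_cscale lookup_add distrib_left)
  show "cscale (a + b) x = cscale a x + cscale b x"
    by (rule poly_mapping_eqI) (simp only: lookup_cscale lookup_add distrib_right)
  show "cscale a (cscale b x) = cscale (a * b) x"
    by (rule poly_mapping_eqI) (simp only: lookup_cscale mult.assoc)
  show "cscale 1 x = x"
    by (rule poly_mapping_eqI) (simp only: lookup_cscale mult_1)
qed

lemma ms: "module cscale"
  using vs module_iff_vector_space by blast

abbreviation "cspan \<equiv> module.span cscale"
abbreviation "cindep S \<equiv> \<not> module.dependent cscale S"
abbreviation "cdim \<equiv> vector_space.dim cscale"


lemma cscale_single: "cscale c (sg m a) = sg m (c * a)"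
  by (rule poly_mapping_eqI) (simp add: lookup_single when_def)

lemma poly_expand: "(p::cpoly) = (\<Sum>m\<in>kys p. sg m (lk p m))"
  by (rule poly_mapping_eqI) (simp add: lookup_sum lookup_single when_def in_keys_iff)

lemma poly_induct_keys:
  assumes "P 0" "\<And>m c. m \<in> kys p \<Longrightarrow> P (sg m c)" "\<And>a b. P a \<Longrightarrow> P b \<Longrightarrow> P (a + b)"
  shows "P (p::cpoly)"
proof -
  have "\<And>S. S \<subseteq> kys p \<Longrightarrow> P (\<Sum>m\<in>S. sg m (lk p m))"
  proof -
    fix S assume Sk: "S \<subseteq> kys p"
    have "finite S" using Sk by (rule finite_subset) simp
    from this Sk show "P (\<Sum>m\<in>S. sg m (lk p m))"
    proof (induction S rule: finite_induct)
      case empty then show ?case using assms(1) by simp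
    next
      case (insert x F)
      have a: "P (sg x (lk p x))" using insert.prems by (intro assms(2)) simp
      have b: "P (\<Sum>m\<in>F. sg m (lk p m))" using insert.prems by (intro insert.IH) simp
      have "P (sg x (lk p x) + (\<Sum>m\<in>F. sg m (lk p m)))" by (rule assms(3)[OF a b])
      then show ?case using insert.hyps by simp
    qed
  qed
  from this[of "kys p"] have "P (\<Sum>m\<in>kys p. sg m (lk p m))" by simp
  then show ?thesis by (simp only: poly_expand[of p, symmetric])
qed

lemma poly_induct:
  assumes "P 0" "\<And>m c. P (sg m c)" "\<And>a b. P a \<Longrightarrow> P b \<Longrightarrow> P (a + b)"
  shows "P (p::cpoly)"
  by (rule poly_induct_keys[where P=P]) (rule assms)+



lemma lookup_pderiv: "lk (pderiv_var i p) m = of_nat (lk m i + 1) * lk p (m + sg i 1)"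
  by (simp add: pderiv_var.rep_eq)

lemma pderiv_add: "pderiv_var i (p + q) = pderiv_var i p + pderiv_var i q"
  by (rule poly_mapping_eqI) (simp add: lookup_pderiv lookup_add distrib_left)

lemma pderiv_zero[simp]: "pderiv_var i 0 = 0"
  by (rule poly_mapping_eqI) (simp add: lookup_pderiv)

lemma pderiv_cscale: "pderiv_var i (cscale c p) = cscale c (pderiv_var i p)"
  by (rule poly_mapping_eqI) (simp add: lookup_pderiv)

lemma pderiv_uminus: "pderiv_var i (- p) = - pderiv_var i p"
  by (rule poly_mapping_eqI) (simp add: lookup_pderiv)

lemma pderiv_diff: "pderiv_var i (p - q) = pderiv_var i p - pderiv_var i q"
  by (rule poly_mapping_eqI) (simp add: lookup_pderiv lookup_minus right_diff_distrib)

lemma pderiv_sum: "pderiv_var i (sum f S) = (\<Sum>x\<in>S. pderiv_var i (f x))"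
  by (induction S rule: infinite_finite_induct) (simp_all add: pderiv_add)

lemma mon_sub_add: "lk m i \<ge> 1 \<Longrightarrow> (m - sg i 1) + sg i 1 = (m :: nat \<Rightarrow>\<^sub>0 nat)"
  by (rule poly_mapping_eqI) (auto simp: lookup_add lookup_minus lookup_single when_def)

lemma mon_sub_add2: "lk b i \<ge> 1 \<Longrightarrow> a + (b - sg i 1) = (a + b) - sg i 1"
  for a b :: "nat \<Rightarrow>\<^sub>0 nat"
  by (rule poly_mapping_eqI) (auto simp: lookup_add lookup_minus lookup_single when_def)

lemma mon_sub_add3: "lk a i \<ge> 1 \<Longrightarrow> (a - sg i 1) + b = (a + b) - sg i 1"
  for a b :: "nat \<Rightarrow>\<^sub>0 nat"
  by (rule poly_mapping_eqI) (auto simp: lookup_add lookup_minus lookup_single when_def)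

lemma pderiv_single: "pderiv_var i (sg m c) = sg (m - sg i 1) (of_nat (lk m i) * c)"
proof (rule poly_mapping_eqI)
  fix m'
  show "lk (pderiv_var i (sg m c)) m' = lk (sg (m - sg i 1) (of_nat (lk m i) * c)) m'"
  proof (cases "m = m' + sg i 1")
    case True
    then show ?thesis by (simp add: lookup_pderiv lookup_add)
  next
    case False
    have "lk (sg (m - sg i 1) (of_nat (lk m i) * c)) m' = 0"
    proof (cases "lk m i = 0")
      case False2: False
      then have "m - sg i 1 \<noteq> m'" using False mon_sub_add[where i=i and m=m] by auto
      then show ?thesis by (simp add: lookup_single)
    qed (simp add: lookup_single)
    moreover have "lk (pderiv_var i (sg m c)) m' = 0"
      using False by (simp add: lookup_pderiv lookup_single)
    ultimately show ?thesis by simp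
  qed
qed

lemma pderiv_mult_single:
  "pderiv_var i (sg a c * sg b d) = pderiv_var i (sg a c) * sg b d + sg a c * pderiv_var i (sg b d)"
proof -
  have L: "pderiv_var i (sg a c * sg b d) = sg (a + b - sg i 1) (of_nat (lk a i + lk b i) * (c * d))"
    by (simp add: mult_single pderiv_single lookup_add)
  have R: "pderiv_var i (sg a c) * sg b d + sg a c * pderiv_var i (sg b d)
     = sg (a - sg i 1 + b) (of_nat (lk a i) * c * d) + sg (a + (b - sg i 1)) (c * (of_nat (lk b i) * d))"
    by (simp add: mult_single pderiv_single)
  consider "lk a i = 0" "lk b i = 0" | "lk a i = 0" "lk b i \<noteq> 0" | "lk a i \<noteq> 0" "lk b i = 0"
    | "lk a i \<noteq> 0" "lk b i \<noteq> 0" by blast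
  then show ?thesis
  proof cases
    case 1
    then show ?thesis unfolding L R by simp
  next
    case 2
    have e1: "a + (b - sg i 1) = a + b - sg i 1" using 2 by (intro mon_sub_add2) simp
    show ?thesis using 2 unfolding L R e1 by (simp add: algebra_simps)
  next
    case 3
    have e2: "a - sg i 1 + b = a + b - sg i 1" using 3 by (intro mon_sub_add3) simp
    show ?thesis using 3 unfolding L R e2 by (simp add: algebra_simps)
  next
    case 4
    have e1: "a + (b - sg i 1) = a + b - sg i 1" using 4 by (intro mon_sub_add2) simp
    have e2: "a - sg i 1 + b = a + b - sg i 1" using 4 by (intro mon_sub_add3) simp
    show ?thesis unfolding L R e1 e2 by (simp add: algebra_simps single_add)
  qed
qed

lemma pderiv_mult: "pderiv_var i (p * q) = pderiv_var i p * q + p * pderiv_var i q"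
proof (induction p rule: poly_induct)
  case (2 a c)
  show ?case
  proof (induction q rule: poly_induct)
    case (3 x y)
    then show ?case by (simp add: distrib_left pderiv_add)
  qed (simp_all add: pderiv_mult_single)
next
  case (3 x y)
  then show ?case by (simp add: distrib_right pderiv_add)
qed simp

lemma pderiv_one[simp]: "pderiv_var i 1 = 0"
proof (rule poly_mapping_eqI)
  fix m :: "nat \<Rightarrow>\<^sub>0 nat"
  have "m + sg i 1 \<noteq> 0"
  proof
    assume "m + sg i 1 = 0"
    then have "lk (m + sg i 1) i = 0" by simp
    then show False by (simp add: lookup_add lookup_single)
  qed
  then show "lk (pderiv_var i 1) m = lk 0 m" by (simp add: lookup_pderiv lookup_one)
qed

lemma pderiv_power: "pderiv_var i (p ^ n) = of_nat n * p ^ (n - 1) * pderiv_var i p"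
proof (induction n)
  case (Suc n)
  then show ?case
    by (cases n) (simp_all add: pderiv_mult algebra_simps)
qed simp



lemma keys_monadd: "kys (a + b) = kys a \<union> kys (b :: nat \<Rightarrow>\<^sub>0 nat)"
  by (auto simp: in_keys_iff lookup_add)

lemma in_pvars: "i \<in> pvars p \<longleftrightarrow> (\<exists>m\<in>kys p. i \<in> kys m)"
  by (simp add: pvars_def)

lemma pvars_add: "pvars (p + q) \<subseteq> pvars p \<union> pvars q"
  using keys_add[of p q] by (auto simp: pvars_def)

lemma keys_cscale: "kys (cscale c p) \<subseteq> kys p"
  by (auto simp: in_keys_iff)

lemma pvars_cscale: "pvars (cscale c p) \<subseteq> pvars p"
  using keys_cscale[of c p] by (auto simp: pvars_def)

lemma pvars_zero[simp]: "pvars 0 = {}"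
  by (simp add: pvars_def)

lemma pvars_one[simp]: "pvars 1 = {}"
  by (simp add: pvars_def)

lemma pvars_sum: "pvars (sum f S) \<subseteq> (\<Union>x\<in>S. pvars (f x))"
proof (induction S rule: infinite_finite_induct)
  case (insert x F)
  then show ?case using pvars_add[of "f x" "sum f F"] by auto
qed auto

lemma pvars_single: "pvars (sg m c) \<subseteq> kys m"
  by (auto simp: pvars_def)

lemma pvars_pvar[simp]: "pvars (pvar i) = {i}"
  by (simp add: pvars_def pvar_def)

lemma pvars_mult: "pvars (p * q) \<subseteq> pvars p \<union> pvars q"
proof
  fix i assume "i \<in> pvars (p * q)"
  then obtain m where m: "m \<in> kys (p * q)" "i \<in> kys m" by (auto simp: pvars_def)
  then obtain a b where "a \<in> kys p" "b \<in> kys q" "m = a + b" using keys_mult[of p q] by blast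
  then show "i \<in> pvars p \<union> pvars q" using m by (auto simp: pvars_def keys_monadd)
qed

lemma pvars_pow: "pvars (p ^ n) \<subseteq> pvars p"
proof (induction n)
  case (Suc n)
  then show ?case using pvars_mult[of p "p ^ n"] by auto
qed simp

lemma keys_pderiv: "m \<in> kys (pderiv_var i p) \<Longrightarrow> m + sg i 1 \<in> kys p"
  by (auto simp: in_keys_iff lookup_pderiv)

lemma pvars_pderiv: "pvars (pderiv_var i p) \<subseteq> pvars p"
proof
  fix k assume "k \<in> pvars (pderiv_var i p)"
  then obtain m where m: "m \<in> kys (pderiv_var i p)" "k \<in> kys m" by (auto simp: pvars_def)
  have "k \<in> kys (m + sg i 1)" using m(2) by (simp add: in_keys_iff lookup_add)
  then show "k \<in> pvars p" using keys_pderiv[OF m(1)] by (auto simp: pvars_def)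
qed

lemma pderiv_free: "i \<notin> pvars p \<Longrightarrow> pderiv_var i p = 0"
proof (rule poly_mapping_eqI)
  fix m :: "nat \<Rightarrow>\<^sub>0 nat" assume "i \<notin> pvars p"
  have "i \<in> kys (m + sg i 1)" by (simp add: in_keys_iff lookup_add)
  then have "m + sg i 1 \<notin> kys p" using \<open>i \<notin> pvars p\<close> by (auto simp: pvars_def)
  then show "lk (pderiv_var i p) m = lk 0 m" by (simp add: lookup_pderiv in_keys_iff)
qed

subsection \<open>Monomial degree\<close>

lemma mon_deg_sum: "finite S \<Longrightarrow> kys m \<subseteq> S \<Longrightarrow> mon_deg m = (\<Sum>i\<in>S. lk m i)"
  unfolding mon_deg_def by (rule sum.mono_neutral_left) (auto simp: in_keys_iff)

lemma mon_deg_add: "mon_deg (a + b) = mon_deg a + mon_deg b"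
proof -
  let ?S = "kys a \<union> kys b"
  have "mon_deg (a + b) = (\<Sum>i\<in>?S. lk (a + b) i)" by (rule mon_deg_sum) (auto simp: keys_monadd)
  also have "\<dots> = (\<Sum>i\<in>?S. lk a i) + (\<Sum>i\<in>?S. lk b i)" by (simp add: lookup_add sum.distrib)
  also have "\<dots> = mon_deg a + mon_deg b"
    using mon_deg_sum[of ?S a] mon_deg_sum[of ?S b] by simp
  finally show ?thesis .
qed

lemma mon_deg_single[simp]: "mon_deg (sg i n) = n"
  by (simp add: mon_deg_def)

lemma mon_deg_zero[simp]: "mon_deg 0 = 0"
  by (simp add: mon_deg_def)

lemma mon_deg_eq_0: "mon_deg m = 0 \<longleftrightarrow> m = 0"
proof
  assume "mon_deg m = 0"
  then have "\<forall>i\<in>kys m. lk m i = 0" by (simp add: mon_deg_def)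
  then show "m = 0" by (intro poly_mapping_eqI) (auto simp: in_keys_iff)
qed simp

lemma homog_add: "homogeneous d p \<Longrightarrow> homogeneous d q \<Longrightarrow> homogeneous d (p + q)"
  using keys_add[of p q] by (auto simp: homogeneous_def)

lemma homog_zero[simp]: "homogeneous d 0"
  by (simp add: homogeneous_def)

lemma homog_sum: "(\<And>x. x \<in> S \<Longrightarrow> homogeneous d (f x)) \<Longrightarrow> homogeneous d (sum f S)"
proof (induction S rule: infinite_finite_induct)
  case (insert x F)
  then show ?case by (simp add: homog_add)
qed auto

lemma homog_pvar: "homogeneous 1 (pvar i)"
  by (simp add: homogeneous_def pvar_def)

subsection \<open>Linear forms\<close>

definition coef :: "cpoly \<Rightarrow> nat \<Rightarrow> complex" where "coef l i = lk l (sg i 1)"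

lemma pderiv_linear: "homogeneous 1 l \<Longrightarrow> pderiv_var i l = sg 0 (coef l i)"
proof (rule poly_mapping_eqI)
  fix m :: "nat \<Rightarrow>\<^sub>0 nat" assume h: "homogeneous 1 l"
  show "lk (pderiv_var i l) m = lk (sg 0 (coef l i)) m"
  proof (cases "m = 0")
    case True then show ?thesis by (simp add: lookup_pderiv coef_def)
  next
    case False
    then have "mon_deg m \<noteq> 0" by (simp add: mon_deg_eq_0)
    then have "mon_deg (m + sg i 1) \<noteq> 1" by (simp add: mon_deg_add)
    then have "m + sg i 1 \<notin> kys l" using h by (auto simp: homogeneous_def)
    then show ?thesis using False by (simp add: lookup_pderiv in_keys_iff lookup_single)
  qed
qed

lemma cscale_cscale: "cscale a (cscale b x) = cscale (a * b) x"
  by (rule poly_mapping_eqI) simp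

lemma cscale_one[simp]: "cscale 1 x = x"
  by (rule poly_mapping_eqI) simp

lemma cscale_zero[simp]: "cscale 0 x = 0"
  by (rule poly_mapping_eqI) simp

lemma pderiv_linpow: "homogeneous 1 l \<Longrightarrow>
  pderiv_var i (l ^ n) = cscale (of_nat n * coef l i) (l ^ (n - 1))"
  by (simp add: pderiv_power pderiv_linear cscale_conv mult_single mult.commute flip: single_of_nat)

subsection \<open>Iterated derivatives\<close>

definition dl :: "nat list \<Rightarrow> cpoly \<Rightarrow> cpoly" where "dl js p = foldr pderiv_var js p"

lemma dl_Nil[simp]: "dl [] p = p" and dl_Cons[simp]: "dl (j # js) p = pderiv_var j (dl js p)"
  by (simp_all add: dl_def)

lemma dl_append: "dl (xs @ ys) p = dl xs (dl ys p)"
  by (simp add: dl_def)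

lemma dl_add: "dl js (p + q) = dl js p + dl js q"
  by (induction js) (simp_all add: pderiv_add)

lemma dl_cscale: "dl js (cscale c p) = cscale c (dl js p)"
  by (induction js) (simp_all add: pderiv_cscale)

lemma dl_zero[simp]: "dl js 0 = 0"
  by (induction js) simp_all

lemma dl_sum: "dl js (sum f S) = (\<Sum>x\<in>S. dl js (f x))"
  by (induction S rule: infinite_finite_induct) (simp_all add: dl_add)

lemma pvars_dl: "pvars (dl js p) \<subseteq> pvars p"
  by (induction js) (use pvars_pderiv in auto)

lemma all_derivs_iff: "q \<in> all_derivs p \<longleftrightarrow> (\<exists>js. q = dl js p)"
proof
  assume "q \<in> all_derivs p"
  then show "\<exists>js. q = dl js p"
  proof (induction rule: all_derivs.induct)
    case self then show ?case by (metis dl_Nil)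
  next
    case (step q i)
    then obtain js where "q = dl js p" by blast
    then show ?case by (metis dl_Cons)
  qed
next
  assume "\<exists>js. q = dl js p"
  then obtain js where q: "q = dl js p" by blast
  have "dl js p \<in> all_derivs p"
    by (induction js) (auto intro: all_derivs.intros)
  then show "q \<in> all_derivs p" using q by simp
qed

definition ff :: "nat \<Rightarrow> nat \<Rightarrow> complex" where "ff e t = (\<Prod>k<t. of_nat (e - k))"

lemma dl_linpow: "homogeneous 1 l \<Longrightarrow>
  dl js (l ^ e) = cscale (ff e (length js) * prod_list (map (coef l) js)) (l ^ (e - length js))"
proof (induction js)
  case Nil then show ?case by (simp add: ff_def)
next
  case (Cons j js)
  then show ?case
    by (simp add: pderiv_cscale pderiv_linpow cscale_cscale ff_def algebra_simps)
qed



lemmas sp_base = module.span_base[OF ms]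
lemmas sp_zero = module.span_zero[OF ms]
lemmas sp_add = module.span_add[OF ms]
lemmas sp_scale = module.span_scale[OF ms]
lemmas sp_sum = module.span_sum[OF ms]
lemmas sp_mono = module.span_mono[OF ms]
lemmas sp_span = module.span_span[OF ms]
lemmas sp_superset = module.span_superset[OF ms]
lemmas sp_diff = module.span_diff[OF ms]
lemmas sp_neg = module.span_neg[OF ms]

lemma sp_induct:
  assumes "x \<in> cspan S" "h 0" "\<And>c x y. x \<in> S \<Longrightarrow> h y \<Longrightarrow> h (cscale c x + y)"
  shows "h x"
  using module.span_induct_alt[OF ms assms(1)] assms(2,3) by blast

lemma sp_subset: "A \<subseteq> cspan B \<Longrightarrow> cspan A \<subseteq> cspan B"
  using sp_mono sp_span by metis

definition fd :: "cpoly set \<Rightarrow> bool" where "fd S \<longleftrightarrow> (\<exists>T. finite T \<and> S \<subseteq> cspan T)"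

lemma fd_subset: "fd S \<Longrightarrow> V \<subseteq> cspan S \<Longrightarrow> fd V"
  unfolding fd_def using sp_subset by (meson order_trans)

lemma fd_finite: "finite S \<Longrightarrow> fd S"
  unfolding fd_def using sp_superset by blast

lemma fd_basis:
  assumes "fd S"
  obtains B where "B \<subseteq> S" "cindep B" "S \<subseteq> cspan B" "card B = cdim S" "finite B"
proof -
  obtain T where T: "finite T" "S \<subseteq> cspan T" using assms fd_def by blast
  obtain B where B: "B \<subseteq> S" "cindep B" "S \<subseteq> cspan B" "card B = cdim S"
    using vector_space.basis_exists[OF vs, of S] by blast
  have "finite B" using vector_space.independent_span_bound[OF vs T(1) B(2)] B(1) T(2) by blast
  then show ?thesis using B that by blast
qed

lemma dim_le_card: "finite W \<Longrightarrow> V \<subseteq> cspan W \<Longrightarrow> cdim V \<le> card W"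
  using vector_space.dim_le_card[OF vs] by blast

lemma dim_mono_fd:
  assumes "V \<subseteq> cspan W" "fd W"
  shows "cdim V \<le> cdim W"
proof -
  obtain BW where BW: "BW \<subseteq> W" "cindep BW" "W \<subseteq> cspan BW" "card BW = cdim W" "finite BW"
    using fd_basis[OF assms(2)] by blast
  have "V \<subseteq> cspan BW" using assms(1) sp_subset[OF BW(3)] by blast
  then show ?thesis using dim_le_card[OF BW(5)] BW(4) by simp
qed

lemma dim_union_le:
  assumes "fd S" "finite N"
  shows "cdim (S \<union> N) \<le> cdim S + card N"
proof -
  obtain B where B: "B \<subseteq> S" "cindep B" "S \<subseteq> cspan B" "card B = cdim S" "finite B"
    using fd_basis[OF assms(1)] by blast
  have "S \<union> N \<subseteq> cspan (B \<union> N)"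
    using B(3) sp_mono[of B "B \<union> N"] sp_superset[of "B \<union> N"] by blast
  then have "cdim (S \<union> N) \<le> card (B \<union> N)" using dim_le_card B(5) assms(2) by blast
  also have "\<dots> \<le> card B + card N" by (rule card_Un_le)
  finally show ?thesis using B(4) by simp
qed

lemma dim_extend:
  assumes "fd U" "U' \<subseteq> cspan U"
  obtains N where "finite N" "N \<subseteq> cspan U" "card N = cdim U - cdim U'" "cdim U' \<le> cdim U"
    "cspan U \<subseteq> cspan (U' \<union> N)"
proof -
  have "fd U'" using fd_subset assms by blast
  obtain B' where B': "B' \<subseteq> U'" "cindep B'" "U' \<subseteq> cspan B'" "card B' = cdim U'" "finite B'"
    using fd_basis[OF \<open>fd U'\<close>] by blast
  have "B' \<subseteq> cspan U" using B'(1) assms(2) by blast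
  then obtain B where B: "B' \<subseteq> B" "B \<subseteq> cspan U" "cindep B" "cspan U \<subseteq> cspan B"
    using vector_space.maximal_independent_subset_extend[OF vs _ B'(2)] by metis
  obtain T where T: "finite T" "U \<subseteq> cspan T" using assms(1) fd_def by blast
  have "B \<subseteq> cspan T" using B(2) sp_subset[OF T(2)] by blast
  then have fB: "finite B" using vector_space.independent_span_bound[OF vs T(1) B(3)] by blast
  have cB: "card B = cdim U"
    using vector_space.basis_card_eq_dim[OF vs B(2) B(4) B(3)] vector_space.dim_span[OF vs] by simp
  define N where "N = B - B'"
  have "finite N" using fB N_def by simp
  moreover have "N \<subseteq> cspan U" using B(2) N_def by blast
  moreover have cN: "card N = card B - card B'" using B(1) fB N_def by (simp add: card_Diff_subset finite_subset)
  moreover have "card B' \<le> card B" using B(1) fB by (simp add: card_mono)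
  moreover have "cspan U \<subseteq> cspan (U' \<union> N)"
  proof -
    have "B \<subseteq> U' \<union> N" using B'(1) N_def by blast
    then show ?thesis using B(4) sp_mono by blast
  qed
  ultimately show ?thesis using that cB B'(4) by simp
qed

lemma dim_insert_fd:
  assumes "fd S" "x \<notin> cspan S"
  shows "cdim (insert x S) = cdim S + 1"
proof -
  obtain B where B: "B \<subseteq> S" "cindep B" "S \<subseteq> cspan B" "card B = cdim S" "finite B"
    using fd_basis[OF assms(1)] by blast
  have "cspan B = cspan S" using B(1,3) sp_mono sp_subset by (meson subset_antisym)
  then have xB: "x \<notin> cspan B" using assms(2) by simp
  have ind: "cindep (insert x B)" using vector_space.independent_insertI[OF vs xB B(2)] .
  have "insert x S \<subseteq> cspan (insert x B)"
    using B(3) sp_mono[of B "insert x B"] sp_base[of x "insert x B"] by blast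
  then have "card (insert x B) = cdim (insert x S)"
    using vector_space.basis_card_eq_dim[OF vs _ _ ind] B(1) by blast
  moreover have "x \<notin> B" using xB sp_base by blast
  ultimately show ?thesis using B(4,5) by simp
qed

lemma linear_span_image:
  assumes add: "\<And>a b. L (a + b) = L a + L b" and sc: "\<And>c a. L (cscale c a) = cscale c (L a)"
  shows "x \<in> cspan S \<Longrightarrow> L x \<in> cspan (L ` S)"
proof -
  have L0: "L 0 = 0" using add[of 0 0] by simp
  assume "x \<in> cspan S"
  then show "L x \<in> cspan (L ` S)"
  proof (rule sp_induct)
    show "L 0 \<in> cspan (L ` S)" using L0 sp_zero by simp
  next
    fix c x y assume "x \<in> S" "L y \<in> cspan (L ` S)"
    then show "L (cscale c x + y) \<in> cspan (L ` S)"
      by (simp add: add sc sp_add sp_scale sp_base)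
  qed
qed

lemma sum_in_span: "(\<And>x. x \<in> A \<Longrightarrow> f x \<in> cspan S) \<Longrightarrow> sum f A \<in> cspan S"
  using sp_sum by blast

subsection \<open>Finite dimensionality of derivative spaces\<close>

definition Bx :: "cpoly \<Rightarrow> (nat \<Rightarrow>\<^sub>0 nat) set" where
  "Bx p = {m. \<exists>m'\<in>kys p. \<forall>k. lk m k \<le> lk m' k}"

lemma finite_below: "finite {m :: nat \<Rightarrow>\<^sub>0 nat. \<forall>k. lk m k \<le> lk m' k}"
proof -
  let ?A = "{m :: nat \<Rightarrow>\<^sub>0 nat. \<forall>k. lk m k \<le> lk m' k}"
  let ?f = "\<lambda>m::nat \<Rightarrow>\<^sub>0 nat. restrict (lk m) (kys m')"
  have "?f ` ?A \<subseteq> PiE (kys m') (\<lambda>k. {..lk m' k})" by (auto simp: restrict_PiE_iff)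
  then have "finite (?f ` ?A)" by (rule finite_subset) (simp add: finite_PiE)
  moreover have "inj_on ?f ?A"
  proof (rule inj_onI)
    fix a b assume a: "a \<in> ?A" and b: "b \<in> ?A" and e: "?f a = ?f b"
    show "a = b"
    proof (rule poly_mapping_eqI)
      fix k show "lk a k = lk b k"
      proof (cases "k \<in> kys m'")
        case True then show ?thesis using fun_cong[OF e, of k] by simp
      next
        case False
        then have "lk m' k = 0" by (simp add: in_keys_iff)
        then show ?thesis using a b by (metis (mono_tags) le_zero_eq mem_Collect_eq)
      qed
    qed
  qed
  ultimately show ?thesis using finite_imageD by blast
qed

lemma finite_Bx: "finite (Bx p)"
proof -
  have "Bx p = (\<Union>m'\<in>kys p. {m. \<forall>k. lk m k \<le> lk m' k})" by (auto simp: Bx_def)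
  then show ?thesis using finite_below by simp
qed

lemma keys_dl_Bx: "kys (dl js p) \<subseteq> Bx p"
proof (induction js)
  case Nil then show ?case by (force simp: Bx_def)
next
  case (Cons j js)
  show ?case
  proof
    fix m assume "m \<in> kys (dl (j # js) p)"
    then have "m + sg j 1 \<in> kys (dl js p)" using keys_pderiv by simp
    then have "m + sg j 1 \<in> Bx p" using Cons by blast
    then obtain m' where "m' \<in> kys p" "\<forall>k. lk (m + sg j 1) k \<le> lk m' k" by (auto simp: Bx_def)
    then have "\<forall>k. lk m k \<le> lk m' k" by (metis le_add1 lookup_add order_trans)
    then show "m \<in> Bx p" using \<open>m' \<in> kys p\<close> by (auto simp: Bx_def)
  qed
qed

lemma keys_in_span: "kys q \<subseteq> M \<Longrightarrow> q \<in> cspan ((\<lambda>m. sg m 1) ` M)"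
proof -
  assume M: "kys q \<subseteq> M"
  have "q = (\<Sum>m\<in>kys q. cscale (lk q m) (sg m 1))"
    by (subst poly_expand) (simp add: cscale_single)
  also have "\<dots> \<in> cspan ((\<lambda>m. sg m 1) ` M)"
    by (intro sum_in_span sp_scale sp_base) (use M in auto)
  finally show ?thesis .
qed

lemma fd_all_derivs: "fd (all_derivs p)"
  unfolding fd_def
proof (intro exI conjI)
  show "finite ((\<lambda>m. sg m 1) ` Bx p)" using finite_Bx by simp
  show "all_derivs p \<subseteq> cspan ((\<lambda>m. sg m 1) ` Bx p)"
    using keys_dl_Bx keys_in_span by (auto simp: all_derivs_iff)
qed

lemma al_def2: "apolar_length p = cdim (all_derivs p)"
  by (simp add: apolar_length_def)



lemma cscale_add_left: "cscale (a + b) x = cscale a x + cscale b x"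
  by (rule poly_mapping_eqI) (simp add: lookup_add distrib_right)

lemma cscale_add_right: "cscale a (x + y) = cscale a x + cscale a y"
  by (rule poly_mapping_eqI) (simp add: lookup_add distrib_left)

lemma cscale_sum: "cscale c (sum f S) = (\<Sum>x\<in>S. cscale c (f x))"
  by (rule poly_mapping_eqI) (simp add: lookup_sum sum_distrib_left)

lemma lookup_pvar: "lk (pvar i') (sg i 1) = (if i' = i then 1 else 0)"
proof -
  have "sg i' (1::nat) = sg i 1 \<longleftrightarrow> i' = i"
  proof
    assume "sg i' (1::nat) = sg i 1"
    then have "lk (sg i' (1::nat)) i' = lk (sg i 1) i'" by simp
    then show "i' = i" by (auto simp: lookup_single when_def split: if_splits)
  qed simp
  then show ?thesis by (simp add: pvar_def lookup_single when_def)
qed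

lemma lookup_pvar': "lk (pvar i') (sg i (Suc 0)) = (if i' = i then 1 else 0)"
  using lookup_pvar[of i' i] by simp

lemma fd_union: "fd A \<Longrightarrow> finite B \<Longrightarrow> fd (A \<union> B)"
proof -
  assume "fd A" "finite B"
  then obtain T where T: "finite T" "A \<subseteq> cspan T" by (auto simp: fd_def)
  have "A \<union> B \<subseteq> cspan (T \<union> B)" using T(2) sp_mono[of T "T \<union> B"] sp_superset[of "T \<union> B"] by blast
  then show ?thesis using T(1) \<open>finite B\<close> by (auto simp: fd_def)
qed

lemma dim_empty: "cdim {} = 0"
  using vector_space.dim_eq_card_independent[OF vs, of "{}"] module.independent_empty[OF ms] by simp

lemma telescope:
  assumes "\<And>t. f t \<le> (f (Suc t) :: nat)"
  shows "(\<Sum>t\<le>n. f t - (case t of 0 \<Rightarrow> 0 | Suc s \<Rightarrow> f s)) = f n"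
proof (induction n)
  case (Suc n)
  then show ?case using assms[of n] by simp
qed simp

lemma lemmaB:
  fixes I :: "nat set"
  assumes fin: "finite I" and lin: "\<And>i. i \<in> I \<Longrightarrow> homogeneous 1 (l i)"
    and nz: "\<And>i. i \<in> I \<Longrightarrow> coef (l i) j \<noteq> 0"
    and P: "P = (\<Sum>i\<in>I. cscale (c i) (l i ^ e))"
  shows "apolar_length P \<le> apolar_length (pderiv_var j P) + card I"
proof -
  define a where "a i = coef (l i) j" for i
  define pc where "pc i js = prod_list (map (coef (l i)) js)" for i js
  define Ev where "Ev t js = (\<Sum>i\<in>I. cscale (pc i js / a i ^ t) (pvar i))" for t js
  define Lt where "Lt t q = (\<Sum>i\<in>I. cscale (c i * ff e t * a i ^ t * lk q (sg i 1)) (l i ^ (e - t)))"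
    for t and q :: cpoly
  define Ug where "Ug t = {Ev t js | js. length js = t}" for t
  define Ug' where "Ug' t = (case t of 0 \<Rightarrow> {} | Suc s \<Rightarrow> Ug s)" for t
  have dlP: "dl js P = (\<Sum>i\<in>I. cscale (c i * (ff e (length js) * pc i js)) (l i ^ (e - length js)))" for js
    unfolding P dl_sum dl_cscale pc_def using lin by (intro sum.cong) (simp_all add: dl_linpow cscale_cscale)
  have lkEv: "lk (Ev t js) (sg i 1) = pc i js / a i ^ t" if "i \<in> I" for t js i
  proof -
    have "lk (Ev t js) (sg i 1) = (\<Sum>i'\<in>I. pc i' js / a i' ^ t * (if i' = i then 1 else 0))"
      by (simp add: Ev_def lookup_sum lookup_pvar lookup_pvar')
    also have "\<dots> = (\<Sum>i'\<in>I. if i' = i then pc i' js / a i' ^ t else 0)"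
      by (intro sum.cong) auto
    also have "\<dots> = pc i js / a i ^ t" using that fin by (simp add: sum.delta)
    finally show ?thesis .
  qed
  have LEv: "Lt (length js) (Ev (length js) js) = dl js P" for js
    unfolding dlP Lt_def
  proof (intro sum.cong refl)
    fix i assume i: "i \<in> I"
    have "a i \<noteq> 0" using nz i by (simp add: a_def)
    then show "cscale (c i * ff e (length js) * a i ^ length js * lk (Ev (length js) js) (sg i 1))
        (l i ^ (e - length js)) = cscale (c i * (ff e (length js) * pc i js)) (l i ^ (e - length js))"
      using lkEv[OF i] by simp
  qed
  have EvS: "Ev (Suc t) (js @ [j]) = Ev t js" for t js
    unfolding Ev_def
  proof (intro sum.cong refl)
    fix i assume i: "i \<in> I"
    have "a i \<noteq> 0" using nz i by (simp add: a_def)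
    then show "cscale (pc i (js @ [j]) / a i ^ Suc t) (pvar i) = cscale (pc i js / a i ^ t) (pvar i)"
      by (simp add: pc_def a_def)
  qed
  have Lt_add: "Lt t (x + y) = Lt t x + Lt t y" for t x y
    by (simp add: Lt_def lookup_add distrib_left distrib_right cscale_add_left sum.distrib)
  have Lt_sc: "Lt t (cscale k x) = cscale k (Lt t x)" for t k x
    by (simp add: Lt_def cscale_sum cscale_cscale mult.commute mult.left_commute)
  have UgS: "Ug t \<subseteq> Ug (Suc t)" for t
  proof
    fix v assume "v \<in> Ug t"
    then obtain js where "v = Ev t js" "length js = t" by (auto simp: Ug_def)
    then show "v \<in> Ug (Suc t)" using EvS[of t js] unfolding Ug_def by (metis (mono_tags) length_append_singleton mem_Collect_eq)
  qed
  have Ug_span: "Ug t \<subseteq> cspan (pvar ` I)" for t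
  proof
    fix v assume "v \<in> Ug t"
    then obtain js where v: "v = Ev t js" by (auto simp: Ug_def)
    have "Ev t js \<in> cspan (pvar ` I)"
      unfolding Ev_def by (rule sum_in_span, rule sp_scale, rule sp_base) simp
    then show "v \<in> cspan (pvar ` I)" using v by simp
  qed
  have fdUg: "fd (Ug t)" for t
    using fd_subset[OF fd_finite Ug_span] fin by blast
  have Ug'_sub: "Ug' t \<subseteq> cspan (Ug t)" for t
  proof (cases t)
    case (Suc s)
    then show ?thesis using UgS[of s] sp_superset[of "Ug t"] by (auto simp: Ug'_def)
  qed (simp add: Ug'_def)
  have "\<forall>t. \<exists>N. finite N \<and> N \<subseteq> cspan (Ug t) \<and> card N = cdim (Ug t) - cdim (Ug' t)
      \<and> cdim (Ug' t) \<le> cdim (Ug t) \<and> cspan (Ug t) \<subseteq> cspan (Ug' t \<union> N)"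
  proof
    fix t
    obtain N where "finite N" "N \<subseteq> cspan (Ug t)" "card N = cdim (Ug t) - cdim (Ug' t)"
      "cdim (Ug' t) \<le> cdim (Ug t)" "cspan (Ug t) \<subseteq> cspan (Ug' t \<union> N)"
      using dim_extend[OF fdUg Ug'_sub] by blast
    then show "\<exists>N. finite N \<and> N \<subseteq> cspan (Ug t) \<and> card N = cdim (Ug t) - cdim (Ug' t)
      \<and> cdim (Ug' t) \<le> cdim (Ug t) \<and> cspan (Ug t) \<subseteq> cspan (Ug' t \<union> N)" by blast
  qed
  from choice[OF this] obtain N where N: "\<And>t. finite (N t)" "\<And>t. card (N t) = cdim (Ug t) - cdim (Ug' t)"
    "\<And>t. cdim (Ug' t) \<le> cdim (Ug t)" "\<And>t. cspan (Ug t) \<subseteq> cspan (Ug' t \<union> N t)"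
    by blast
  define W where "W = (\<Union>t\<in>{..e}. Lt t ` N t)"
  have finW: "finite W" using N(1) by (simp add: W_def)
  have mono: "cdim (Ug t) \<le> cdim (Ug (Suc t))" for t using N(3)[of "Suc t"] by (simp add: Ug'_def)
  have "card W \<le> (\<Sum>t\<le>e. card (Lt t ` N t))" unfolding W_def by (rule card_UN_le) simp
  also have "\<dots> \<le> (\<Sum>t\<le>e. card (N t))" by (intro sum_mono card_image_le N(1))
  also have "\<dots> = (\<Sum>t\<le>e. cdim (Ug t) - (case t of 0 \<Rightarrow> 0 | Suc s \<Rightarrow> cdim (Ug s)))"
    by (intro sum.cong refl) (simp add: N(2) Ug'_def dim_empty split: nat.splits)
  also have "\<dots> = cdim (Ug e)" by (rule telescope[where f="\<lambda>t. cdim (Ug t)", OF mono])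
  also have "\<dots> \<le> card (pvar ` I)" using dim_le_card[OF _ Ug_span] fin by simp
  also have "\<dots> \<le> card I" using fin by (rule card_image_le)
  finally have cardW: "card W \<le> card I" .
  have incl: "all_derivs P \<subseteq> cspan (all_derivs (pderiv_var j P) \<union> W)"
  proof
    fix q assume "q \<in> all_derivs P"
    then obtain js where q: "q = dl js P" by (auto simp: all_derivs_iff)
    define t where "t = length js"
    show "q \<in> cspan (all_derivs (pderiv_var j P) \<union> W)"
    proof (cases "t \<le> e")
      case False
      then have "ff e t = 0" unfolding ff_def using False by (intro prod_zero) (auto intro!: bexI[of _ e])
      then have "q = 0" unfolding q dlP t_def[symmetric] by simp
      then show ?thesis using sp_zero by simp
    next
      case True
      have "Ev t js \<in> Ug t" using t_def Ug_def by blast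
      then have "Ev t js \<in> cspan (Ug' t \<union> N t)" using N(4) sp_superset by blast
      then have "Lt t (Ev t js) \<in> cspan (Lt t ` (Ug' t \<union> N t))"
        by (rule linear_span_image[of "Lt t", OF Lt_add Lt_sc])
      moreover have "Lt t ` (Ug' t \<union> N t) \<subseteq> all_derivs (pderiv_var j P) \<union> W"
      proof
        fix w assume "w \<in> Lt t ` (Ug' t \<union> N t)"
        then obtain v where v: "v \<in> Ug' t \<union> N t" "w = Lt t v" by blast
        show "w \<in> all_derivs (pderiv_var j P) \<union> W"
        proof (cases "v \<in> N t")
          case True then show ?thesis using v \<open>t \<le> e\<close> W_def by blast
        next
          case False
          then have "v \<in> Ug' t" using v by blast
          then obtain s where s: "t = Suc s" "v \<in> Ug s" by (cases t) (auto simp: Ug'_def)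
          then obtain ks where ks: "v = Ev s ks" "length ks = s" by (auto simp: Ug_def)
          have "w = Lt (Suc s) (Ev (Suc s) (ks @ [j]))" using v(2) s(1) ks(1) EvS by simp
          also have "\<dots> = dl (ks @ [j]) P" using LEv[of "ks @ [j]"] ks(2) by simp
          also have "\<dots> = dl ks (pderiv_var j P)" by (simp add: dl_append)
          finally show ?thesis by (auto simp: all_derivs_iff)
        qed
      qed
      ultimately have "Lt t (Ev t js) \<in> cspan (all_derivs (pderiv_var j P) \<union> W)"
        using sp_mono by blast
      then show ?thesis using LEv[of js] q t_def by simp
    qed
  qed
  have "apolar_length P \<le> cdim (all_derivs (pderiv_var j P) \<union> W)"
    unfolding al_def2 by (rule dim_mono_fd[OF incl fd_union[OF fd_all_derivs finW]])
  also have "\<dots> \<le> apolar_length (pderiv_var j P) + card W"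
    unfolding al_def2 by (rule dim_union_le[OF fd_all_derivs finW])
  finally show ?thesis using cardW by simp
qed



lemma indep_zero:
  assumes "cindep B" "finite S" "S \<subseteq> B" "(\<Sum>v\<in>S. cscale (u v) v) = 0" "v \<in> S"
  shows "u v = 0"
  using assms module.dependent_explicit[OF ms, of B] by blast

lemma indep_if_zero:
  assumes "finite A" "\<And>g x. (\<Sum>x\<in>A. cscale (g x) x) = 0 \<Longrightarrow> x \<in> A \<Longrightarrow> g x = 0"
  shows "cindep A"
  using vector_space.independent_if_scalars_zero[OF vs assms(1)] assms(2) by blast

lemma all_derivs_pvars: "q \<in> all_derivs p \<Longrightarrow> pvars q \<subseteq> pvars p"
  using pvars_dl by (auto simp: all_derivs_iff)

lemma span_derivs_closed: "q \<in> cspan (all_derivs p) \<Longrightarrow> pderiv_var i q \<in> cspan (all_derivs p)"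
proof -
  assume "q \<in> cspan (all_derivs p)"
  then have "pderiv_var i q \<in> cspan (pderiv_var i ` all_derivs p)"
    by (rule linear_span_image[of "pderiv_var i", OF pderiv_add pderiv_cscale])
  moreover have "pderiv_var i ` all_derivs p \<subseteq> all_derivs p"
    by (rule image_subsetI) (rule all_derivs.step)
  ultimately show ?thesis using sp_mono by blast
qed

lemma mult_cscale_left: "cscale c a * h = cscale c (a * h)"
  by (simp add: cscale_conv mult.assoc)

lemma mult_cscale_right: "a * cscale c h = cscale c (a * h)"
  by (simp add: cscale_conv mult.left_commute)

lemma prod_span:
  assumes "a \<in> cspan BA" "h \<in> cspan BH"
  shows "a * h \<in> cspan ((\<lambda>p. fst p * snd p) ` (BA \<times> BH))"
proof -
  let ?P = "(\<lambda>p. fst p * snd p) ` (BA \<times> BH)"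
  have step1: "x * h \<in> cspan ?P" if x: "x \<in> BA" for x
  proof -
    have "x * h \<in> cspan ((\<lambda>h. x * h) ` BH)"
      by (rule linear_span_image[of "\<lambda>h. x * h", OF _ _ assms(2)]) (simp_all add: distrib_left mult_cscale_right)
    moreover have "(\<lambda>h. x * h) ` BH \<subseteq> ?P" using x by force
    ultimately show ?thesis using sp_mono by blast
  qed
  have "a * h \<in> cspan ((\<lambda>a. a * h) ` BA)"
    by (rule linear_span_image[of "\<lambda>a. a * h", OF _ _ assms(1)]) (simp_all add: distrib_right mult_cscale_left)
  moreover have "(\<lambda>a. a * h) ` BA \<subseteq> cspan ?P" using step1 by blast
  ultimately show ?thesis using sp_subset by blast
qed

lemma al_mult_le:
  assumes "pvars A \<subseteq> X" "pvars H \<subseteq> Y" "X \<inter> Y = {}"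
  shows "apolar_length (A * H) \<le> apolar_length A * apolar_length H"
proof -
  have claim: "\<exists>a h. a \<in> all_derivs A \<and> h \<in> all_derivs H \<and> dl js (A * H) = a * h" for js
  proof (induction js)
    case Nil then show ?case by (auto intro: all_derivs.self)
  next
    case (Cons i js)
    then obtain a h where ah: "a \<in> all_derivs A" "h \<in> all_derivs H" "dl js (A * H) = a * h" by blast
    have pa: "pvars a \<subseteq> X" using all_derivs_pvars[OF ah(1)] assms(1) by blast
    have ph: "pvars h \<subseteq> Y" using all_derivs_pvars[OF ah(2)] assms(2) by blast
    show ?case
    proof (cases "i \<in> X")
      case True
      then have "i \<notin> pvars h" using ph assms(3) by blast
      then have "dl (i # js) (A * H) = pderiv_var i a * h" using ah(3) by (simp add: pderiv_mult pderiv_free)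
      then show ?thesis using ah(1,2) all_derivs.step by blast
    next
      case False
      then have "i \<notin> pvars a" using pa by blast
      then have "dl (i # js) (A * H) = a * pderiv_var i h" using ah(3) by (simp add: pderiv_mult pderiv_free)
      then show ?thesis using ah(1,2) all_derivs.step by blast
    qed
  qed
  obtain BA where BA: "BA \<subseteq> all_derivs A" "cindep BA" "all_derivs A \<subseteq> cspan BA"
      "card BA = cdim (all_derivs A)" "finite BA"
    using fd_basis[OF fd_all_derivs] by blast
  obtain BH where BH: "BH \<subseteq> all_derivs H" "cindep BH" "all_derivs H \<subseteq> cspan BH"
      "card BH = cdim (all_derivs H)" "finite BH"
    using fd_basis[OF fd_all_derivs] by blast
  let ?P = "(\<lambda>p. fst p * snd p) ` (BA \<times> BH)"
  have "all_derivs (A * H) \<subseteq> cspan ?P"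
  proof
    fix q assume "q \<in> all_derivs (A * H)"
    then obtain js where "q = dl js (A * H)" by (auto simp: all_derivs_iff)
    then obtain a h where "a \<in> all_derivs A" "h \<in> all_derivs H" "q = a * h" using claim by blast
    then show "q \<in> cspan ?P" using prod_span[OF subsetD[OF BA(3)] subsetD[OF BH(3)]] by simp
  qed
  then have "cdim (all_derivs (A * H)) \<le> card ?P" by (intro dim_le_card) (simp_all add: BA(5) BH(5))
  also have "\<dots> \<le> card (BA \<times> BH)" using BA(5) BH(5) by (intro card_image_le) simp
  also have "\<dots> = card BA * card BH" by (simp add: card_cartesian_product)
  finally show ?thesis using BA(4) BH(4) by (simp add: al_def2)
qed

lemma mon_sep:
  fixes a b mx my :: "nat \<Rightarrow>\<^sub>0 nat"
  assumes "kys a \<subseteq> X" "kys b \<subseteq> Y" "kys mx \<subseteq> X" "kys my \<subseteq> Y" "X \<inter> Y = {}"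
  shows "a + b = mx + my \<longleftrightarrow> a = mx \<and> b = my"
proof
  assume e: "a + b = mx + my"
  have k: "lk a k + lk b k = lk mx k + lk my k" for k using arg_cong[OF e, of "\<lambda>m. lk m k"] by (simp add: lookup_add)
  have "lk a k = lk mx k \<and> lk b k = lk my k" for k
  proof (cases "k \<in> X")
    case True
    then have "k \<notin> Y" using assms(5) by blast
    then have "lk b k = 0" "lk my k = 0" using assms(2,4) by (auto simp: in_keys_iff)
    then show ?thesis using k[of k] by simp
  next
    case False
    then have "lk a k = 0" "lk mx k = 0" using assms(1,3) by (auto simp: in_keys_iff)
    then show ?thesis using k[of k] by simp
  qed
  then show "a = mx \<and> b = my" by (simp add: poly_mapping_eq_iff fun_eq_iff)
qed simp

lemma keys_mon_sub: "pvars x \<subseteq> X \<Longrightarrow> m \<in> kys x \<Longrightarrow> kys m \<subseteq> X"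
  by (auto simp: pvars_def)

lemma lk_out: "pvars x \<subseteq> X \<Longrightarrow> \<not> kys m \<subseteq> X \<Longrightarrow> lk x m = 0"
proof -
  assume a: "pvars x \<subseteq> X" "\<not> kys m \<subseteq> X"
  have "m \<notin> kys x"
  proof
    assume "m \<in> kys x"
    then show False using keys_mon_sub[OF a(1)] a(2) by blast
  qed
  then show ?thesis by (simp add: in_keys_iff)
qed

lemma lk_mult_sep:
  assumes "pvars x \<subseteq> X" "pvars y \<subseteq> Y" "X \<inter> Y = {}" "kys mx \<subseteq> X" "kys my \<subseteq> Y"
  shows "lk (x * y) (mx + my) = lk x mx * lk y my"
proof -
  have hx: "\<forall>m\<in>kys x. kys m \<subseteq> X" using assms(1) keys_mon_sub by blast
  have hy: "\<forall>m\<in>kys y. kys m \<subseteq> Y" using assms(2) keys_mon_sub by blast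
  show ?thesis
  proof (induction x rule: poly_induct_keys)
    case (2 a c)
    show ?case
    proof (induction y rule: poly_induct_keys)
      case (2 b d)
      have "kys a \<subseteq> X" using \<open>a \<in> kys x\<close> hx by blast
      moreover have "kys b \<subseteq> Y" using \<open>b \<in> kys y\<close> hy by blast
      ultimately have "a + b = mx + my \<longleftrightarrow> a = mx \<and> b = my" using mon_sep assms by blast
      then show ?case by (auto simp: mult_single lookup_single when_def)
    next
      case (3 p q) then show ?case by (simp add: distrib_left lookup_add)
    qed simp
  next
    case (3 p q) then show ?case by (simp add: distrib_right lookup_add)
  qed simp
qed



lemma cscale_m1: "cscale (-1) x = - x"
  by (rule poly_mapping_eqI) simp

lemma prod_indep_zero:
  assumes fA: "finite BA" and iA: "cindep BA" and pA: "\<And>x. x \<in> BA \<Longrightarrow> pvars x \<subseteq> X"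
    and fH: "finite BH" and iH: "cindep BH" and pH: "\<And>y. y \<in> BH \<Longrightarrow> pvars y \<subseteq> Y"
    and XY: "X \<inter> Y = {}"
    and Z: "(\<Sum>p\<in>BA \<times> BH. cscale (u p) (fst p * snd p)) = 0"
    and r: "r \<in> BA \<times> BH"
  shows "u r = 0"
proof -
  have w0: "(\<Sum>y\<in>BH. u (x, y) * lk y my) = 0" if my: "kys my \<subseteq> Y" and x: "x \<in> BA" for my x
  proof -
    define w where "w x = (\<Sum>y\<in>BH. u (x, y) * lk y my)" for x
    have "(\<Sum>x\<in>BA. cscale (w x) x) = 0"
    proof (rule poly_mapping_eqI)
      fix m :: "nat \<Rightarrow>\<^sub>0 nat"
      show "lk (\<Sum>x\<in>BA. cscale (w x) x) m = lk 0 m"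
      proof (cases "kys m \<subseteq> X")
        case True
        have "lk (\<Sum>x\<in>BA. cscale (w x) x) m = (\<Sum>x\<in>BA. \<Sum>y\<in>BH. u (x, y) * (lk x m * lk y my))"
          by (simp add: lookup_sum w_def sum_distrib_right sum_distrib_left mult_ac)
        also have "\<dots> = (\<Sum>x\<in>BA. \<Sum>y\<in>BH. u (x, y) * lk (x * y) (m + my))"
          using lk_mult_sep[OF pA pH XY True my] by simp
        also have "\<dots> = (\<Sum>p\<in>BA \<times> BH. u p * lk (fst p * snd p) (m + my))"
          by (simp add: sum.cartesian_product split_def)
        also have "\<dots> = lk (\<Sum>p\<in>BA \<times> BH. cscale (u p) (fst p * snd p)) (m + my)"
          by (simp add: lookup_sum)
        also have "\<dots> = 0" using Z by simp
        finally show ?thesis by simp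
      next
        case False
        then show ?thesis using lk_out[OF pA] by (simp add: lookup_sum)
      qed
    qed
    then have "w x = 0" using indep_zero[OF iA fA order_refl _ x] by blast
    then show ?thesis by (simp add: w_def)
  qed
  obtain x y where xy: "r = (x, y)" "x \<in> BA" "y \<in> BH" using r by blast
  have "(\<Sum>y\<in>BH. cscale (u (x, y)) y) = 0"
  proof (rule poly_mapping_eqI)
    fix my :: "nat \<Rightarrow>\<^sub>0 nat"
    show "lk (\<Sum>y\<in>BH. cscale (u (x, y)) y) my = lk 0 my"
    proof (cases "kys my \<subseteq> Y")
      case True
      then show ?thesis using w0[OF True xy(2)] by (simp add: lookup_sum)
    next
      case False
      then show ?thesis using lk_out[OF pH] by (simp add: lookup_sum)
    qed
  qed
  then have "u (x, y) = 0" using indep_zero[OF iH fH order_refl _ xy(3), of "\<lambda>y. u (x, y)"] by simp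
  then show ?thesis using xy(1) by simp
qed

lemma al_mult_ge:
  assumes "pvars A \<subseteq> X" "pvars H \<subseteq> Y" "X \<inter> Y = {}"
  shows "apolar_length A * apolar_length H \<le> apolar_length (A * H)"
proof -
  let ?S = "cspan (all_derivs (A * H))"
  have closed: "a * h \<in> ?S" if a: "a \<in> all_derivs A" and h: "h \<in> all_derivs H" for a h
  using a h proof (induction a arbitrary: h rule: all_derivs.induct)
    case self
    from self(1) show ?case
    proof (induction h rule: all_derivs.induct)
      case self then show ?case by (intro sp_base all_derivs.self)
    next
      case (step h i)
      show ?case
      proof (cases "i \<in> Y")
        case True
        then have "i \<notin> pvars A" using assms by blast
        then have "A * pderiv_var i h = pderiv_var i (A * h)" by (simp add: pderiv_mult pderiv_free)
        then show ?thesis using span_derivs_closed[OF step.IH] by simp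
      next
        case False
        then have "i \<notin> pvars h" using all_derivs_pvars[OF step.hyps] assms by blast
        then show ?thesis by (simp add: pderiv_free sp_zero)
      qed
    qed
  next
    case (step a i)
    have pa: "pvars a \<subseteq> X" using all_derivs_pvars[OF step.hyps] assms by blast
    have ph: "pvars h \<subseteq> Y" using all_derivs_pvars[OF step.prems] assms by blast
    show ?case
    proof (cases "i \<in> X")
      case True
      then have "i \<notin> pvars h" using ph assms by blast
      then have "pderiv_var i a * h = pderiv_var i (a * h)" by (simp add: pderiv_mult pderiv_free)
      then show ?thesis using span_derivs_closed[OF step.IH[OF step.prems]] by simp
    next
      case False
      then have "i \<notin> pvars a" using pa by blast
      then show ?thesis by (simp add: pderiv_free sp_zero)
    qed
  qed
  obtain BA where BA: "BA \<subseteq> all_derivs A" "cindep BA" "all_derivs A \<subseteq> cspan BA"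
      "card BA = cdim (all_derivs A)" "finite BA"
    using fd_basis[OF fd_all_derivs] by blast
  obtain BH where BH: "BH \<subseteq> all_derivs H" "cindep BH" "all_derivs H \<subseteq> cspan BH"
      "card BH = cdim (all_derivs H)" "finite BH"
    using fd_basis[OF fd_all_derivs] by blast
  have pA: "pvars x \<subseteq> X" if "x \<in> BA" for x using that BA(1) all_derivs_pvars assms(1) by blast
  have pH: "pvars y \<subseteq> Y" if "y \<in> BH" for y using that BH(1) all_derivs_pvars assms(2) by blast
  define f where "f p = fst p * snd p" for p :: "cpoly \<times> cpoly"
  let ?P = "f ` (BA \<times> BH)"
  have fin: "finite (BA \<times> BH)" using BA(5) BH(5) by simp
  have zero: "u r = 0" if "(\<Sum>p\<in>BA \<times> BH. cscale (u p) (f p)) = 0" "r \<in> BA \<times> BH" for u r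
    using prod_indep_zero[OF BA(5) BA(2) pA BH(5) BH(2) pH assms(3)] that unfolding f_def by blast
  have inj: "inj_on f (BA \<times> BH)"
  proof (rule inj_onI, rule ccontr)
    fix p q assume p: "p \<in> BA \<times> BH" and q: "q \<in> BA \<times> BH" and e: "f p = f q" and ne: "p \<noteq> q"
    define u where "u r = (if r = p then 1 else if r = q then -1 else (0::complex))" for r
    have "(\<Sum>r\<in>BA \<times> BH. cscale (u r) (f r))
        = (\<Sum>r\<in>BA \<times> BH. (if r = p then f r else 0) + (if r = q then - f r else 0))"
      by (intro sum.cong refl) (auto simp: u_def ne cscale_m1)
    also have "\<dots> = f p - f q" using p q fin by (simp add: sum.distrib)
    also have "\<dots> = 0" using e by simp
    finally have "u p = 0" using zero p by blast
    then show False by (simp add: u_def)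
  qed
  have ind: "cindep ?P"
  proof (rule indep_if_zero)
    show "finite ?P" using fin by simp
  next
    fix g x assume s: "(\<Sum>x\<in>?P. cscale (g x) x) = 0" and x: "x \<in> ?P"
    have "(\<Sum>r\<in>BA \<times> BH. cscale (g (f r)) (f r)) = 0"
      using s by (simp add: sum.reindex[OF inj])
    then show "g x = 0" using zero[of "\<lambda>r. g (f r)"] x by blast
  qed
  have c1: "card ?P = card BA * card BH" using card_image[OF inj] by (simp add: card_cartesian_product)
  have c2: "card ?P = cdim ?P" using vector_space.dim_eq_card_independent[OF vs ind] by simp
  have c3: "cdim ?P \<le> cdim (all_derivs (A * H))"
  proof (rule dim_mono_fd[OF _ fd_all_derivs])
    show "?P \<subseteq> ?S"
    proof
      fix v assume "v \<in> ?P"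
      then obtain a b where ab: "a \<in> BA" "b \<in> BH" "v = a * b" by (auto simp: f_def)
      show "v \<in> ?S" using closed[OF subsetD[OF BA(1) ab(1)] subsetD[OF BH(1) ab(2)]] ab(3) by simp
    qed
  qed
  show ?thesis using c1 c2 c3 BA(4) BH(4) by (simp add: al_def2)
qed



lemma polar:
  fixes y :: "'b \<Rightarrow> 'a::comm_ring_1"
  assumes "finite A"
  shows "\<forall>m\<le>card A. (\<Sum>S\<in>Pow A. (-1) ^ (card A - card S) * (sum y S) ^ m)
          = (if m = card A then of_nat (fact (card A)) * prod y A else 0)"
  using assms
proof (induction A rule: finite_induct)
  case empty
  show ?case by simp
next
  case (insert x F)
  define n where "n = card F"
  have cI: "card (insert x F) = Suc n" using insert n_def by simp
  show ?case
  proof (intro allI impI)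
    fix m assume m: "m \<le> card (insert x F)"
    have inj: "inj_on (insert x) (Pow F)"
      using insert(2) by (auto simp: inj_on_def)
    have disj: "Pow F \<inter> insert x ` Pow F = {}" using insert(2) by auto
    have fP: "finite (Pow F)" using insert(1) by simp
    let ?g = "\<lambda>S. (-1) ^ (Suc n - card S) * (sum y S) ^ m :: 'a"
    have "(\<Sum>S\<in>Pow (insert x F). ?g S) = (\<Sum>S\<in>Pow F. ?g S) + (\<Sum>S\<in>insert x ` Pow F. ?g S)"
      unfolding Pow_insert by (rule sum.union_disjoint) (use fP disj in auto)
    also have "(\<Sum>S\<in>insert x ` Pow F. ?g S) = (\<Sum>S\<in>Pow F. ?g (insert x S))"
      by (rule sum.reindex[OF inj, unfolded comp_def])
    also have "(\<Sum>S\<in>Pow F. ?g S) + (\<Sum>S\<in>Pow F. ?g (insert x S))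
        = (\<Sum>S\<in>Pow F. (-1) ^ (n - card S) * ((y x + sum y S) ^ m - (sum y S) ^ m))"
      unfolding sum.distrib[symmetric]
    proof (intro sum.cong refl)
      fix S assume S: "S \<in> Pow F"
      have fS: "finite S" using S insert(1) finite_subset by auto
      have xS: "x \<notin> S" using S insert(2) by auto
      have cS: "card S \<le> n" using S insert(1) n_def by (simp add: card_mono)
      have e1: "Suc n - card S = Suc (n - card S)" using cS by simp
      have e2: "Suc n - card (insert x S) = n - card S" using fS xS by simp
      show "?g S + ?g (insert x S) = (-1) ^ (n - card S) * ((y x + sum y S) ^ m - (sum y S) ^ m)"
        unfolding e1 e2 using fS xS by (simp add: algebra_simps)
    qed
    also have "\<dots> = (\<Sum>S\<in>Pow F. \<Sum>k<m. (-1) ^ (n - card S) *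
        (of_nat (m choose k) * (sum y S) ^ k * y x ^ (m - k)))"
    proof (intro sum.cong refl)
      fix S
      have "(y x + sum y S) ^ m = (sum y S + y x) ^ m" by (simp add: add.commute)
      also have "\<dots> = (\<Sum>k\<le>m. of_nat (m choose k) * (sum y S) ^ k * y x ^ (m - k))"
        by (rule binomial_ring)
      also have "\<dots> = (\<Sum>k<m. of_nat (m choose k) * (sum y S) ^ k * y x ^ (m - k)) + (sum y S) ^ m"
        by (simp add: lessThan_Suc_atMost[symmetric])
      finally show "(-1) ^ (n - card S) * ((y x + sum y S) ^ m - (sum y S) ^ m) =
        (\<Sum>k<m. (-1) ^ (n - card S) * (of_nat (m choose k) * (sum y S) ^ k * y x ^ (m - k)))"
        by (simp add: sum_distrib_left)
    qed
    also have "\<dots> = (\<Sum>k<m. of_nat (m choose k) * y x ^ (m - k) *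
        (\<Sum>S\<in>Pow F. (-1) ^ (card F - card S) * (sum y S) ^ k))"
      by (subst sum.swap) (simp add: sum_distrib_left n_def mult_ac)
    also have "\<dots> = (\<Sum>k<m. if k = n then of_nat (m choose k) * y x ^ (m - k) *
        (of_nat (fact n) * prod y F) else 0)"
    proof (intro sum.cong refl)
      fix k assume "k \<in> {..<m}"
      then have "k \<le> card F" using m cI n_def by simp
      then show "of_nat (m choose k) * y x ^ (m - k) * (\<Sum>S\<in>Pow F. (-1) ^ (card F - card S) * (sum y S) ^ k)
        = (if k = n then of_nat (m choose k) * y x ^ (m - k) * (of_nat (fact n) * prod y F) else 0)"
        using insert.IH n_def by simp
    qed
    also have "\<dots> = (if n < m then of_nat (m choose n) * y x ^ (m - n) * (of_nat (fact n) * prod y F) else 0)"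
      by (simp add: sum.delta)
    also have "\<dots> = (if m = card (insert x F) then of_nat (fact (card (insert x F))) * prod y (insert x F) else 0)"
    proof (cases "m = Suc n")
      case True
      then show ?thesis using cI insert(1,2) by (simp add: algebra_simps)
    next
      case False
      then show ?thesis using m cI by simp
    qed
    finally show "(\<Sum>S\<in>Pow (insert x F). (-1) ^ (card (insert x F) - card S) * (sum y S) ^ m) =
      (if m = card (insert x F) then of_nat (fact (card (insert x F))) * prod y (insert x F) else 0)"
      using cI by simp
  qed
qed



lemma pvar_pow: "pvar i ^ n = sg (sg i n) 1"
proof (induction n)
  case 0 then show ?case by simp
next
  case (Suc n)
  then show ?case by (simp add: pvar_def mult_single flip: single_add)
qed

lemma prod_single: "finite S \<Longrightarrow> (\<Prod>k\<in>S. sg (f k) (1::complex)) = sg (\<Sum>k\<in>S. f k) 1"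
  by (induction S rule: finite_induct) (simp_all add: mult_single)

lemma mon_expand: "(m :: nat \<Rightarrow>\<^sub>0 nat) = (\<Sum>k\<in>kys m. sg k (lk m k))"
  by (rule poly_mapping_eqI) (simp add: lookup_sum lookup_single when_def in_keys_iff)

definition Slots :: "(nat \<Rightarrow>\<^sub>0 nat) \<Rightarrow> (nat \<times> nat) set" where
  "Slots m = Sigma (kys m) (\<lambda>k. {..<lk m k})"

lemma finite_Slots: "finite (Slots m)"
  by (simp add: Slots_def)

lemma card_Slots: "card (Slots m) = mon_deg m"
  by (simp add: Slots_def mon_deg_def card_SigmaI)

lemma mon_prod: "(sg m 1 :: cpoly) = (\<Prod>p\<in>Slots m. pvar (fst p))"
proof -
  have "(\<Prod>p\<in>Slots m. pvar (fst p)) = (\<Prod>k\<in>kys m. \<Prod>s<lk m k. pvar k)"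
    unfolding Slots_def by (subst prod.Sigma) (auto simp: split_def)
  also have "\<dots> = (\<Prod>k\<in>kys m. sg (sg k (lk m k)) 1)" by (simp add: pvar_pow)
  also have "\<dots> = sg (\<Sum>k\<in>kys m. sg k (lk m k)) 1" by (rule prod_single) simp
  also have "\<dots> = sg m 1" using mon_expand[of m] by simp
  finally show ?thesis by simp
qed

lemma single0_pow: "(sg 0 a :: cpoly) ^ k = sg 0 (a ^ k)"
  by (induction k) (simp_all add: mult_single)

lemma neg1_pow: "((-1) :: cpoly) ^ k = sg 0 ((-1) ^ k)"
proof -
  have "((-1) :: cpoly) = sg 0 (-1)" by (simp add: single_uminus)
  then show ?thesis by (simp add: single0_pow)
qed

definition lf :: "(nat \<times> nat) set \<Rightarrow> cpoly" where "lf S = (\<Sum>p\<in>S. pvar (fst p))"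

lemma mon_waring:
  "(sg m 1 :: cpoly) = (\<Sum>S\<in>Pow (Slots m).
     cscale ((-1) ^ (mon_deg m - card S) / of_nat (fact (mon_deg m))) (lf S ^ mon_deg m))"
proof -
  let ?d = "mon_deg m"
  have P: "(\<Sum>S\<in>Pow (Slots m). (-1) ^ (?d - card S) * (lf S) ^ ?d)
     = of_nat (fact ?d) * (sg m 1 :: cpoly)"
    using polar[OF finite_Slots, of m "\<lambda>p. pvar (fst p)", rule_format, of ?d]
    by (simp add: card_Slots lf_def mon_prod)
  have "(\<Sum>S\<in>Pow (Slots m). cscale ((-1) ^ (?d - card S) / of_nat (fact ?d)) (lf S ^ ?d))
      = sg 0 (1 / of_nat (fact ?d)) * (\<Sum>S\<in>Pow (Slots m). (-1) ^ (?d - card S) * (lf S) ^ ?d)"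
  proof -
    have tm: "cscale (a / f) x = sg 0 (1 / f) * (sg 0 a * x)" for a f x
      by (simp add: cscale_conv mult_single flip: mult.assoc)
    show ?thesis unfolding tm neg1_pow sum_distrib_left ..
  qed
  also have "\<dots> = sg 0 (1 / of_nat (fact ?d)) * (sg 0 (of_nat (fact ?d)) * sg m 1)"
    unfolding P by (simp flip: single_of_nat)
  also have "\<dots> = sg m 1" by (simp add: mult_single flip: mult.assoc)
  finally show ?thesis by simp
qed

definition RepW :: "nat set \<Rightarrow> nat \<Rightarrow> cpoly \<Rightarrow> bool" where
  "RepW V d F \<longleftrightarrow> (\<exists>(r::nat) c l. (\<forall>i<r. linear_form_in V (l i)) \<and> F = (\<Sum>i<r. cscale (c i) (l i ^ d)))"

lemma RepW_zero: "RepW V d 0"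
  unfolding RepW_def by (rule exI[of _ 0]) simp

lemma RepW_add_term:
  assumes "RepW V d F" "linear_form_in V q"
  shows "RepW V d (F + cscale a (q ^ d))"
proof -
  obtain r :: nat and c l where rl: "\<forall>i<r. linear_form_in V (l i)" "F = (\<Sum>i<r. cscale (c i) (l i ^ d))"
    using assms(1) unfolding RepW_def by blast
  have "(\<Sum>i<Suc r. cscale ((c(r := a)) i) ((l(r := q)) i ^ d)) = F + cscale a (q ^ d)"
    using rl(2) by simp
  moreover have "\<forall>i<Suc r. linear_form_in V ((l(r := q)) i)" using rl(1) assms(2) by (simp add: less_Suc_eq)
  ultimately show ?thesis unfolding RepW_def by metis
qed

lemma RepW_sum:
  "finite S \<Longrightarrow> (\<And>x. x \<in> S \<Longrightarrow> linear_form_in V (g x)) \<Longrightarrow> RepW V d (\<Sum>x\<in>S. cscale (f x) (g x ^ d))"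
proof (induction S rule: finite_induct)
  case empty then show ?case by (simp add: RepW_zero)
next
  case (insert x F)
  then have "RepW V d ((\<Sum>x\<in>F. cscale (f x) (g x ^ d)) + cscale (f x) (g x ^ d))"
    by (intro RepW_add_term) simp_all
  then show ?case using insert by (simp add: add.commute)
qed

lemma lf_linear: "S \<subseteq> Slots m \<Longrightarrow> kys m \<subseteq> V \<Longrightarrow> linear_form_in V (lf S)"
proof -
  assume S: "S \<subseteq> Slots m" and V: "kys m \<subseteq> V"
  have "homogeneous 1 (lf S)" unfolding lf_def by (rule homog_sum) (rule homog_pvar)
  moreover have "pvars (lf S) \<subseteq> V"
  proof -
    have "pvars (lf S) \<subseteq> (\<Union>p\<in>S. pvars (pvar (fst p)))" unfolding lf_def by (rule pvars_sum)
    also have "\<dots> \<subseteq> V" using S V by (auto simp: Slots_def)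
    finally show ?thesis .
  qed
  ultimately show ?thesis by (simp add: linear_form_in_def)
qed

lemma waring_exists:
  assumes "homogeneous d F" "pvars F \<subseteq> V"
  shows "RepW V d F"
proof -
  define k where "k m S = lk F m * ((-1) ^ (mon_deg m - card S) / of_nat (fact (mon_deg m)))"
    for m and S :: "(nat \<times> nat) set"
  define Sg where "Sg = Sigma (kys F) (\<lambda>m. Pow (Slots m))"
  have "F = (\<Sum>m\<in>kys F. cscale (lk F m) (sg m 1))"
    by (subst poly_expand) (simp add: cscale_single)
  also have "\<dots> = (\<Sum>m\<in>kys F. \<Sum>S\<in>Pow (Slots m). cscale (k m S) (lf S ^ d))"
  proof (intro sum.cong refl)
    fix m assume m: "m \<in> kys F"
    then have "mon_deg m = d" using assms(1) by (simp add: homogeneous_def)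
    then show "cscale (lk F m) (sg m 1) = (\<Sum>S\<in>Pow (Slots m). cscale (k m S) (lf S ^ d))"
      by (subst mon_waring) (simp add: cscale_sum cscale_cscale k_def)
  qed
  also have "\<dots> = (\<Sum>p\<in>Sg. cscale (k (fst p) (snd p)) (lf (snd p) ^ d))"
    unfolding Sg_def by (subst sum.Sigma) (simp_all add: finite_Slots split_def)
  finally have F: "F = (\<Sum>p\<in>Sg. cscale (k (fst p) (snd p)) (lf (snd p) ^ d))" .
  have "RepW V d (\<Sum>p\<in>Sg. cscale (k (fst p) (snd p)) (lf (snd p) ^ d))"
  proof (rule RepW_sum)
    show "finite Sg" unfolding Sg_def by (simp add: finite_Slots)
  next
    fix p assume "p \<in> Sg"
    then have a: "snd p \<subseteq> Slots (fst p)" and b: "fst p \<in> kys F" by (auto simp: Sg_def)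
    have c: "kys (fst p) \<subseteq> V" using b assms(2) by (auto simp: pvars_def)
    show "linear_form_in V (lf (snd p))" by (rule lf_linear[OF a c])
  qed
  then show ?thesis using F by simp
qed

lemma waring_decomp:
  assumes "homogeneous d F" "pvars F \<subseteq> V"
  shows "\<exists>c l. (\<forall>i<waring_rank V d F. linear_form_in V (l i))
     \<and> F = (\<Sum>i<waring_rank V d F. cscale (c i) (l i ^ d))"
proof -
  have "\<exists>(r::nat) c l. (\<forall>i<r. linear_form_in V (l i)) \<and> F = (\<Sum>i<r. cscale (c i) (l i ^ d))"
    using waring_exists[OF assms] by (simp add: RepW_def)
  then show ?thesis unfolding waring_rank_def by (rule LeastI_ex)
qed



lemma core:
  assumes G: "pvars G \<subseteq> X" and H: "pvars H \<subseteq> Y" and K: "pvars K \<subseteq> Y" and XY: "X \<inter> Y = {}"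
    and j: "j \<in> X" and hom: "homogeneous d (G * H + K)"
  shows "apolar_length (pderiv_var j G) * apolar_length H
     \<le> apolar_length (pderiv_var j (pderiv_var j G)) * apolar_length H + waring_rank (X \<union> Y) d (G * H + K)"
proof -
  define F where "F = G * H + K"
  define r where "r = waring_rank (X \<union> Y) d F"
  have pF: "pvars F \<subseteq> X \<union> Y"
    using pvars_add[of "G * H" K] pvars_mult[of G H] G H K unfolding F_def by blast
  obtain c l where cl: "\<forall>i<r. linear_form_in (X \<union> Y) (l i)" "F = (\<Sum>i<r. cscale (c i) (l i ^ d))"
    using waring_decomp[OF hom[folded F_def] pF] unfolding r_def by blast
  have lin: "homogeneous 1 (l i)" if "i < r" for i using cl(1) that by (simp add: linear_form_in_def)
  define I where "I = {i \<in> {..<r}. coef (l i) j \<noteq> 0}"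
  define c' where "c' i = c i * (of_nat d * coef (l i) j)" for i
  have dF: "pderiv_var j F = (\<Sum>i<r. cscale (c' i) (l i ^ (d - 1)))"
    unfolding cl(2) pderiv_sum
  proof (intro sum.cong refl)
    fix i assume "i \<in> {..<r}"
    then have li: "homogeneous 1 (l i)" using lin by simp
    show "pderiv_var j (cscale (c i) (l i ^ d)) = cscale (c' i) (l i ^ (d - 1))"
      by (simp add: pderiv_cscale pderiv_linpow[OF li] cscale_cscale c'_def)
  qed
  also have "\<dots> = (\<Sum>i\<in>I. cscale (c' i) (l i ^ (d - 1)))"
    by (rule sum.mono_neutral_right) (auto simp: I_def c'_def)
  finally have dF2: "pderiv_var j F = (\<Sum>i\<in>I. cscale (c' i) (l i ^ (d - 1)))" .
  have finI: "finite I" by (simp add: I_def)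
  have B: "apolar_length (pderiv_var j F) \<le> apolar_length (pderiv_var j (pderiv_var j F)) + card I"
  proof (rule lemmaB[OF finI _ _ dF2])
    fix i assume "i \<in> I"
    then have "i < r" "coef (l i) j \<noteq> 0" by (auto simp: I_def)
    then show "homogeneous 1 (l i)" "coef (l i) j \<noteq> 0" using lin by auto
  qed
  have "I \<subseteq> {..<r}" by (auto simp: I_def)
  then have cI: "card I \<le> r" using card_mono[of "{..<r}" I] by simp
  have jY: "j \<notin> Y" using j XY by blast
  have jH: "pderiv_var j H = 0" using jY H by (intro pderiv_free) blast
  have jK: "pderiv_var j K = 0" using jY K by (intro pderiv_free) blast
  have d1: "pderiv_var j F = pderiv_var j G * H" by (simp add: F_def pderiv_add pderiv_mult jH jK)
  have d2: "pderiv_var j (pderiv_var j F) = pderiv_var j (pderiv_var j G) * H"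
    by (simp add: d1 pderiv_mult jH)
  have pG1: "pvars (pderiv_var j G) \<subseteq> X" using pvars_pderiv G by blast
  have pG2: "pvars (pderiv_var j (pderiv_var j G)) \<subseteq> X" using pvars_pderiv pG1 by blast
  have "apolar_length (pderiv_var j G) * apolar_length H \<le> apolar_length (pderiv_var j F)"
    unfolding d1 by (rule al_mult_ge[OF pG1 H XY])
  also have "\<dots> \<le> apolar_length (pderiv_var j (pderiv_var j G) * H) + r"
    using B cI d2 by simp
  also have "\<dots> \<le> apolar_length (pderiv_var j (pderiv_var j G)) * apolar_length H + r"
    using al_mult_le[OF pG2 H XY] by simp
  finally show ?thesis unfolding r_def F_def .
qed

lemma span_bound_x:
  assumes "q \<in> cspan S" "\<And>p. p \<in> S \<Longrightarrow> \<forall>m\<in>kys p. lk m x < k"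
  shows "\<forall>m\<in>kys q. lk m x < k"
  using assms(1)
proof (rule sp_induct)
  show "\<forall>m\<in>kys (0::cpoly). lk m x < k" by simp
next
  fix c p and y :: cpoly assume p: "p \<in> S" and y: "\<forall>m\<in>kys y. lk m x < k"
  show "\<forall>m\<in>kys (cscale c p + y). lk m x < k"
    using keys_add[of "cscale c p" y] keys_cscale[of c p] assms(2)[OF p] y by blast
qed

lemma derivs_bound_x:
  assumes "q \<in> all_derivs p" "\<forall>m\<in>kys p. lk m x < k"
  shows "\<forall>m\<in>kys q. lk m x < k"
  using assms
proof (induction rule: all_derivs.induct)
  case self then show ?case by simp
next
  case (step q i)
  show ?case
  proof
    fix m assume "m \<in> kys (pderiv_var i q)"
    then have "m + sg i 1 \<in> kys q" by (rule keys_pderiv)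
    then have "lk (m + sg i 1) x < k" using step by blast
    then show "lk m x < k" by (simp add: lookup_add)
  qed
qed

lemma al_pow_gap:
  assumes "a \<ge> 1"
  shows "apolar_length (pderiv_var x (pderiv_var x (pvar x ^ a))) + 1 \<le> apolar_length (pderiv_var x (pvar x ^ a))"
proof -
  define k where "k = a - 1"
  define Q where "Q = pderiv_var x (pvar x ^ a)"
  have cf: "coef (pvar x) x = 1" by (simp add: coef_def pvar_def)
  have "Q = cscale (of_nat a * coef (pvar x) x) (pvar x ^ (a - 1))"
    unfolding Q_def by (rule pderiv_linpow[OF homog_pvar])
  then have Q: "Q = sg (sg x k) (of_nat a)"
    unfolding k_def by (simp add: cf pvar_pow cscale_single)
  have kQ: "sg x k \<in> kys Q" using assms by (simp add: Q)
  have bdQ: "\<forall>m\<in>kys (pderiv_var x Q). lk m x < k"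
  proof
    fix m assume "m \<in> kys (pderiv_var x Q)"
    then have "m + sg x 1 \<in> kys Q" by (rule keys_pderiv)
    then have "m + sg x 1 = sg x k" by (simp add: Q split: if_splits)
    then have "lk (m + sg x 1) x = k" by simp
    then show "lk m x < k" by (simp add: lookup_add)
  qed
  have notin: "Q \<notin> cspan (all_derivs (pderiv_var x Q))"
  proof
    assume "Q \<in> cspan (all_derivs (pderiv_var x Q))"
    then have "\<forall>m\<in>kys Q. lk m x < k"
      by (rule span_bound_x) (rule derivs_bound_x[OF _ bdQ])
    then show False using kQ by fastforce
  qed
  have "cdim (insert Q (all_derivs (pderiv_var x Q))) = apolar_length (pderiv_var x Q) + 1"
    using dim_insert_fd[OF fd_all_derivs notin] by (simp add: al_def2)
  moreover have "cdim (insert Q (all_derivs (pderiv_var x Q))) \<le> apolar_length Q"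
  proof -
    have "insert Q (all_derivs (pderiv_var x Q)) \<subseteq> all_derivs Q"
    proof
      fix v assume "v \<in> insert Q (all_derivs (pderiv_var x Q))"
      then show "v \<in> all_derivs Q"
      proof
        assume "v = Q" then show ?thesis by (simp add: all_derivs.self)
      next
        assume "v \<in> all_derivs (pderiv_var x Q)"
        then obtain js where "v = dl js (pderiv_var x Q)" by (auto simp: all_derivs_iff)
        then have "v = dl (js @ [x]) Q" by (simp add: dl_append)
        then show ?thesis by (auto simp: all_derivs_iff)
      qed
    qed
    then show ?thesis unfolding al_def2 by (intro dim_mono_fd[OF _ fd_all_derivs]) (use sp_superset in blast)
  qed
  ultimately show ?thesis unfolding Q_def by simp
qed



theorem mainTheorem7:
  fixes X Y :: "nat set"
  assumes "finite X" and "finite Y" and "X \<inter> Y = {}"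
  shows
   "(\<forall>(G::cpoly) (H::cpoly) (K::cpoly) d dG dH j.
       pvars G \<subseteq> X \<and> pvars H \<subseteq> Y \<and> pvars K \<subseteq> Y \<and>
       homogeneous dG G \<and> homogeneous dH H \<and>
       homogeneous d (G * H) \<and> homogeneous d K \<and> j \<in> X \<longrightarrow>
       (int (apolar_length (pderiv_var j G))
          - int (apolar_length (pderiv_var j (pderiv_var j G))))
         * int (apolar_length H)
       \<le> int (waring_rank (X \<union> Y) d (G * H + K)))
  \<and> (\<forall>(H::cpoly) (K::cpoly) d x1 (a::nat).
       x1 \<in> X \<and> a \<ge> 1 \<and> pvars H \<subseteq> Y \<and> pvars K \<subseteq> Y \<and>
       homogeneous d (pvar x1 ^ a * H) \<and> homogeneous d K \<longrightarrow>
       apolar_length H \<le> waring_rank (X \<union> Y) d (pvar x1 ^ a * H + K))"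
proof (intro conjI allI impI)
  fix G H K :: cpoly and d dG dH j
  assume h: "pvars G \<subseteq> X \<and> pvars H \<subseteq> Y \<and> pvars K \<subseteq> Y \<and>
       homogeneous dG G \<and> homogeneous dH H \<and>
       homogeneous d (G * H) \<and> homogeneous d K \<and> j \<in> X"
  have hom: "homogeneous d (G * H + K)" using h by (simp add: homog_add)
  have c: "apolar_length (pderiv_var j G) * apolar_length H
     \<le> apolar_length (pderiv_var j (pderiv_var j G)) * apolar_length H + waring_rank (X \<union> Y) d (G * H + K)"
    using core[OF _ _ _ assms(3) _ hom] h by blast
  then have "int (apolar_length (pderiv_var j G)) * int (apolar_length H)
     \<le> int (apolar_length (pderiv_var j (pderiv_var j G))) * int (apolar_length H) + int (waring_rank (X \<union> Y) d (G * H + K))"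
    by (metis of_nat_add of_nat_le_iff of_nat_mult)
  then show "(int (apolar_length (pderiv_var j G))
          - int (apolar_length (pderiv_var j (pderiv_var j G))))
         * int (apolar_length H)
       \<le> int (waring_rank (X \<union> Y) d (G * H + K))"
    by (simp add: left_diff_distrib)
next
  fix H K :: cpoly and d x1 and a :: nat
  assume h: "x1 \<in> X \<and> a \<ge> 1 \<and> pvars H \<subseteq> Y \<and> pvars K \<subseteq> Y \<and>
       homogeneous d (pvar x1 ^ a * H) \<and> homogeneous d K"
  have hom: "homogeneous d (pvar x1 ^ a * H + K)" using h by (simp add: homog_add)
  have pG: "pvars (pvar x1 ^ a) \<subseteq> X" using pvars_pow[of "pvar x1" a] h by auto
  have c: "apolar_length (pderiv_var x1 (pvar x1 ^ a)) * apolar_length H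
     \<le> apolar_length (pderiv_var x1 (pderiv_var x1 (pvar x1 ^ a))) * apolar_length H
        + waring_rank (X \<union> Y) d (pvar x1 ^ a * H + K)"
    using core[OF pG _ _ assms(3) _ hom] h by blast
  have g: "apolar_length (pderiv_var x1 (pderiv_var x1 (pvar x1 ^ a))) + 1
      \<le> apolar_length (pderiv_var x1 (pvar x1 ^ a))"
    using al_pow_gap h by blast
  have "(apolar_length (pderiv_var x1 (pderiv_var x1 (pvar x1 ^ a))) + 1) * apolar_length H
      \<le> apolar_length (pderiv_var x1 (pvar x1 ^ a)) * apolar_length H"
    using g by (rule mult_right_mono) simp
  then show "apolar_length H \<le> waring_rank (X \<union> Y) d (pvar x1 ^ a * H + K)"
    using c by (simp add: algebra_simps)
qed

end
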